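(* Let $\gamma:\mathbb{R}\to\mathbb{R}^3$ be a $C^\infty$ regular $l$-periodic curve and $\xi$ a $C^\infty$ $l$-odd-periodic vector field along $\gamma$ with $\gamma'(s),\xi(s)$ linearly independent for all $s$ and $\det(\gamma',\xi,\xi')\equiv 0$. Let $\tilde F(s,u)=\gamma(s)+u\xi(s)$, $(s,u)\in\mathbb{R}^2$, be the asymptotic completion, regarded on $M=\mathbb{R}^2/\!\sim$, and $S(F)\subset M$ its singular set. Then $\tilde F$ has at least one singular point which is not a cuspidal edge singularity on each connected component of $S(F)$. In particular, $\tilde F$ has at least one singular point which is not a cuspidal edge singularity.
   Context: $l$-periodic means $\gamma(s+l)=\gamma(s)$; regular means $\gamma'\neq0$; $l$-odd-periodic means $\xi(s+l)=-\xi(s)$; $\sim$ identifies $(s,u)$ with $(s+l,-u)$. A singular point is a point where the Jacobian has rank $<2$. Map germs $f_1$ at $p_1$, $f_2$ at $p_2$ are right-left equivalent if there are diffeomorphisms $\varphi$ of $\mathbb{R}^2$, $\Phi$ of $\mathbb{R}^3$ with $\varphi(p_1)=p_2$ and $\Phi\circ f_1=f_2\circ\varphi$ near $p_1$. A singular point $p$ is a cuspidal edge if the germ at $p$ is right-left equivalent to the germ at $0$ of $f_C(u,v)=(2u^3,-3u^2,v)$. *)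

theory Defs
  imports "HOL-Analysis.Analysis"
begin

fun Ck :: "nat \<Rightarrow> ('a::euclidean_space \<Rightarrow> 'b::real_normed_vector) \<Rightarrow> bool" where
  "Ck 0 f = continuous_on UNIV f"
| "Ck (Suc k) f = ((\<forall>x. f differentiable (at x)) \<and>
       (\<forall>i\<in>Basis. Ck k (\<lambda>x. frechet_derivative f (at x) i)))"

definition smooth :: "('a::euclidean_space \<Rightarrow> 'b::real_normed_vector) \<Rightarrow> bool" where
  "smooth f \<longleftrightarrow> (\<forall>k. Ck k f)"

definition diffeo :: "('a::euclidean_space \<Rightarrow> 'a) \<Rightarrow> bool" where
  "diffeo \<phi> \<longleftrightarrow> bij \<phi> \<and> smooth \<phi> \<and> smooth (inv \<phi>)"

definition periodic :: "real \<Rightarrow> (real \<Rightarrow> 'b) \<Rightarrow> bool" where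
  "periodic l g \<longleftrightarrow> (\<forall>s. g (s + l) = g s)"

definition odd_periodic :: "real \<Rightarrow> (real \<Rightarrow> 'b::uminus) \<Rightarrow> bool" where
  "odd_periodic l g \<longleftrightarrow> (\<forall>s. g (s + l) = - g s)"

definition asym_completion ::
  "(real \<Rightarrow> real^3) \<Rightarrow> (real \<Rightarrow> real^3) \<Rightarrow> real \<times> real \<Rightarrow> real^3" where
  "asym_completion \<gamma> \<xi> = (\<lambda>(s, u). \<gamma> s + u *\<^sub>R \<xi> s)"

definition mob_rel :: "real \<Rightarrow> ((real \<times> real) \<times> (real \<times> real)) set" where
  "mob_rel l = {((s, u), (t, v)). \<exists>n::int. t = s + of_int n * l \<and> v = (if even n then u else - u)}"

definition quot_top :: "('a::topological_space \<times> 'a) set \<Rightarrow> 'a set topology" where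
  "quot_top E = topology (\<lambda>U. U \<subseteq> UNIV // E \<and> open (\<Union>U))"

definition mob_top :: "real \<Rightarrow> (real \<times> real) set topology" where
  "mob_top l = quot_top (mob_rel l)"

definition singular_point :: "('a::euclidean_space \<Rightarrow> 'b::euclidean_space) \<Rightarrow> 'a \<Rightarrow> bool" where
  "singular_point f p \<longleftrightarrow> dim (range (frechet_derivative f (at p))) < 2"

definition rl_equivalent ::
  "('a::euclidean_space \<Rightarrow> 'b::euclidean_space) \<Rightarrow> 'a \<Rightarrow> ('a \<Rightarrow> 'b) \<Rightarrow> 'a \<Rightarrow> bool" where
  "rl_equivalent f1 p1 f2 p2 \<longleftrightarrow>
     (\<exists>\<phi> \<Phi>. diffeo \<phi> \<and> diffeo \<Phi> \<and> \<phi> p1 = p2 \<and>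
        (\<exists>U. open U \<and> p1 \<in> U \<and> (\<forall>x\<in>U. \<Phi> (f1 x) = f2 (\<phi> x))))"

definition fC :: "real \<times> real \<Rightarrow> real^3" where
  "fC = (\<lambda>(u, v). vector [2 * u ^ 3, - 3 * u ^ 2, v])"

definition cuspidal_edge :: "(real \<times> real \<Rightarrow> real^3) \<Rightarrow> real \<times> real \<Rightarrow> bool" where
  "cuspidal_edge f p \<longleftrightarrow> singular_point f p \<and> rl_equivalent f p fC 0"

definition singular_set :: "real \<Rightarrow> (real \<times> real \<Rightarrow> real^3) \<Rightarrow> (real \<times> real) set set" where
  "singular_set l f = {c \<in> UNIV // mob_rel l. \<forall>p\<in>c. singular_point f p}"

lemma istopology_quot:
  assumes "equiv UNIV E"
  shows "istopology (\<lambda>U. U \<subseteq> UNIV // E \<and> open (\<Union>U))"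
proof -
  have *: "\<Union>(S \<inter> T) = \<Union>S \<inter> \<Union>T" if "S \<subseteq> UNIV // E" "T \<subseteq> UNIV // E" for S T
  proof
    show "\<Union>S \<inter> \<Union>T \<subseteq> \<Union>(S \<inter> T)"
    proof
      fix x assume "x \<in> \<Union>S \<inter> \<Union>T"
      then obtain A B where AB: "A \<in> S" "B \<in> T" "x \<in> A" "x \<in> B" by blast
      have "A = B" using quotient_disj[OF assms, of A B] AB that by blast
      thus "x \<in> \<Union>(S \<inter> T)" using AB by blast
    qed
  qed blast
  show ?thesis unfolding istopology_def
  proof (rule conjI; intro allI impI)
    fix S T :: "'a set set"
    assume "S \<subseteq> UNIV // E \<and> open (\<Union>S)" "T \<subseteq> UNIV // E \<and> open (\<Union>T)"
    then show "S \<inter> T \<subseteq> UNIV // E \<and> open (\<Union>(S \<inter> T))"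
      using *[of S T] by (auto intro: open_Int)
  next
    fix K :: "'a set set set"
    assume "\<forall>U\<in>K. U \<subseteq> UNIV // E \<and> open (\<Union>U)"
    then show "\<Union>K \<subseteq> UNIV // E \<and> open (\<Union>(\<Union>K))"
    proof -
      have "\<Union>(\<Union>K) = \<Union>((\<lambda>U. \<Union>U) ` K)" by blast
      moreover have "open (\<Union>((\<lambda>U. \<Union>U) ` K))"
        using \<open>\<forall>U\<in>K. _\<close> by (intro open_Union) blast
      ultimately show ?thesis using \<open>\<forall>U\<in>K. _\<close> by auto
    qed
  qed
qed

lemma equiv_mob_rel: "equiv UNIV (mob_rel l)"
proof (rule equivI)
  show "mob_rel l \<subseteq> UNIV \<times> UNIV" by simp
  show "refl (mob_rel l)"
    unfolding refl_on_def mob_rel_def by (auto intro: exI[of _ 0])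
  show "sym (mob_rel l)"
    unfolding sym_def mob_rel_def
  proof (clarify)
    fix s n and u :: real
    show "\<exists>m::int. s = s + of_int n * l + of_int m * l \<and> u = (if even m then (if even n then u else - u) else - (if even n then u else - u))"
      by (rule exI[of _ "- n"]) (cases "even n"; cases "even m"; simp add: algebra_simps)
  qed
  show "trans (mob_rel l)"
    unfolding trans_def mob_rel_def
  proof (clarify)
    fix s n m and u :: real
    show "\<exists>k::int. s + of_int n * l + of_int m * l = s + of_int k * l \<and>
       (if even m then (if even n then u else - u) else - (if even n then u else - u)) = (if even k then u else - u)"
      by (rule exI[of _ "n + m"]) (cases "even n"; cases "even m"; simp add: algebra_simps)
  qed
qed
end

theory Submission
  imports Defs
begin


lemma two_le_dim:
  fixes v w :: "'a::euclidean_space"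
  assumes "v \<in> S" "w \<in> S" "\<And>c d. c *\<^sub>R v + d *\<^sub>R w = 0 \<Longrightarrow> c = 0 \<and> d = 0"
  shows "2 \<le> dim S"
proof -
  have w0: "w \<noteq> 0" using assms(3)[of 0 1] by auto
  have vw: "v \<noteq> w" using assms(3)[of 1 "-1"] by auto
  have "v \<notin> span {w}"
  proof
    assume "v \<in> span {w}"
    then obtain k where "v = k *\<^sub>R w" by (auto simp: span_singleton)
    then show False using assms(3)[of 1 "-k"] by auto
  qed
  moreover have "independent {w}" using w0
    by (simp add: independent_insert)
  ultimately have "independent {v, w}" by (rule independent_insertI)
  moreover have "{v,w} \<subseteq> S" using assms by auto
  ultimately have "card {v,w} \<le> dim S" using independent_card_le_dim by blast
  then show ?thesis using vw by simp
qed

lemma dim_le1: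
  fixes w :: "'a::euclidean_space"
  assumes "S \<subseteq> span {w}"
  shows "dim S < 2"
proof -
  have "dim S \<le> card {w}" using dim_le_card[OF assms] by simp
  then show ?thesis by simp
qed

lemma vector3_eq: "(vector [a, b, c] :: real^3) = a *\<^sub>R axis 1 1 + b *\<^sub>R axis 2 1 + c *\<^sub>R axis 3 1"
  by (simp add: vec_eq_iff forall_3 vector_3 axis_def)

definition DfC :: "real \<times> real \<Rightarrow> real \<times> real \<Rightarrow> real^3" where
  "DfC = (\<lambda>(x,y) (h,k). (6*x^2*h) *\<^sub>R axis 1 1 + (-6*x*h) *\<^sub>R axis 2 1 + k *\<^sub>R axis 3 1)"

lemma fC_deriv: "(fC has_derivative DfC z) (at z)"
proof -
  have e: "fC = (\<lambda>z. (2 * fst z ^ 3) *\<^sub>R axis 1 1 + (- 3 * fst z ^ 2) *\<^sub>R axis 2 1 + snd z *\<^sub>R (axis 3 1::real^3))"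
    by (auto simp: fC_def vector3_eq)
  show ?thesis unfolding e
    apply (cases z)
    apply (auto simp: DfC_def intro!: derivative_eq_intros ext)
    apply (simp add: algebra_simps)
    done
qed


lemma diffeo_diff:
  assumes "diffeo \<phi>" shows "\<phi> differentiable (at x)" "inv \<phi> differentiable (at x)"
proof -
  have "Ck (Suc 0) \<phi>" "Ck (Suc 0) (inv \<phi>)" using assms unfolding diffeo_def smooth_def by blast+
  then show "\<phi> differentiable (at x)" "inv \<phi> differentiable (at x)" by simp_all
qed

lemma DfC_indep:
  assumes "x \<noteq> 0" "c *\<^sub>R DfC (x,y) (1,0) + d *\<^sub>R DfC (x,y) (0,1) = 0"
  shows "c = 0 \<and> d = 0"
proof -
  have "(c *\<^sub>R DfC (x,y) (1,0) + d *\<^sub>R DfC (x,y) (0,1)) $ 1 = 0"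
       "(c *\<^sub>R DfC (x,y) (1,0) + d *\<^sub>R DfC (x,y) (0,1)) $ 3 = 0" using assms(2) by auto
  then have "c * (6 * x^2) = 0" "d = 0" by (auto simp: DfC_def axis_def)
  then show ?thesis using assms(1) by auto
qed

lemma not_cusp:
  fixes F :: "real \<times> real \<Rightarrow> real^3" and \<sigma> :: "real \<Rightarrow> real \<times> real"
  assumes DF: "\<And>q. (F has_derivative DF q) (at q)"
   and ker: "DF p \<eta> = 0" and eta: "\<eta> \<noteq> 0"
   and sig: "(\<sigma> has_vector_derivative \<eta>) (at t)" "\<sigma> t = p"
   and T: "open T" "t \<in> T" "continuous_on T \<sigma>" "\<And>t'. t' \<in> T \<Longrightarrow> singular_point F (\<sigma> t')"
  shows "\<not> rl_equivalent F p fC 0"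
proof
  assume "rl_equivalent F p fC 0"
  then obtain \<phi> \<Phi> U where dphi: "diffeo \<phi>" "diffeo \<Phi>" "\<phi> p = 0" "open U" "p \<in> U"
     "\<forall>x\<in>U. \<Phi> (F x) = fC (\<phi> x)" unfolding rl_equivalent_def by blast
  define D\<phi> where "D\<phi> q = frechet_derivative \<phi> (at q)" for q
  define D\<Phi> where "D\<Phi> q = frechet_derivative \<Phi> (at q)" for q
  define Di where "Di q = frechet_derivative (inv \<phi>) (at q)" for q
  have hphi: "(\<phi> has_derivative D\<phi> q) (at q)" for q
    unfolding D\<phi>_def using diffeo_diff[OF dphi(1)] frechet_derivative_works by blast
  have hPhi: "(\<Phi> has_derivative D\<Phi> q) (at q)" for q
    unfolding D\<Phi>_def using diffeo_diff[OF dphi(2)] frechet_derivative_works by blast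
  have hinv: "(inv \<phi> has_derivative Di q) (at q)" for q
    unfolding Di_def using diffeo_diff[OF dphi(1)] frechet_derivative_works by blast
  have bij: "bij \<phi>" using dphi(1) diffeo_def by blast
  have lin: "linear (D\<phi> q)" for q using hphi has_derivative_linear by blast
  have linP: "linear (D\<Phi> q)" for q using hPhi has_derivative_linear by blast
  have injD: "inj (D\<phi> q)" for q
  proof -
    have "((\<lambda>x. inv \<phi> (\<phi> x)) has_derivative (Di (\<phi> q) \<circ> D\<phi> q)) (at q)"
      using diff_chain_at[OF hphi hinv] by (simp add: o_def)
    moreover have "(\<lambda>x. inv \<phi> (\<phi> x)) = id" using bij by (auto simp: bij_def)
    ultimately have "Di (\<phi> q) \<circ> D\<phi> q = id"
      using has_derivative_unique has_derivative_id by (metis eq_id_iff)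
    then show ?thesis by (metis inj_on_id inj_on_imageI2)
  qed
  have surjD: "surj (D\<phi> q)" for q using linear_injective_imp_surjective[OF lin injD] by simp
  have E: "D\<Phi> (F q) \<circ> DF q = DfC (\<phi> q) \<circ> D\<phi> q" if "q \<in> U" for q
  proof -
    have "((\<lambda>x. \<Phi> (F x)) has_derivative (D\<Phi> (F q) \<circ> DF q)) (at q)"
      using diff_chain_at[OF DF hPhi] by (simp add: o_def)
    then have "((\<lambda>x. fC (\<phi> x)) has_derivative (D\<Phi> (F q) \<circ> DF q)) (at q)"
      by (rule has_derivative_transform_within_open[OF _ dphi(4) that]) (use dphi(6) in auto)
    moreover have "((\<lambda>x. fC (\<phi> x)) has_derivative (DfC (\<phi> q) \<circ> D\<phi> q)) (at q)"
      using diff_chain_at[OF hphi fC_deriv] by (simp add: o_def)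
    ultimately show ?thesis using has_derivative_unique by blast
  qed
  have sing: "fst (\<phi> q) = 0" if "q \<in> U" "singular_point F q" for q
  proof (rule ccontr)
    assume nz: "fst (\<phi> q) \<noteq> 0"
    have "dim (range (DF q)) < 2" using that(2) frechet_derivative_at[OF DF]
      unfolding singular_point_def by metis
    moreover have "dim (range (D\<Phi> (F q) \<circ> DF q)) \<le> dim (range (DF q))"
      using dim_image_le[OF linP, of "F q" "range (DF q)"] by (simp add: image_comp)
    moreover have "range (DfC (\<phi> q) \<circ> D\<phi> q) = range (DfC (\<phi> q))"
      using surjD[of q] by (metis image_comp)
    moreover have "2 \<le> dim (range (DfC (\<phi> q)))"
    proof (rule two_le_dim[of "DfC (\<phi> q) (1,0)" _ "DfC (\<phi> q) (0,1)"])
      fix c d assume "c *\<^sub>R DfC (\<phi> q) (1, 0) + d *\<^sub>R DfC (\<phi> q) (0, 1) = 0"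
      then show "c = 0 \<and> d = 0" using DfC_indep[OF nz, of c "snd (\<phi> q)" d] by simp
    qed auto
    ultimately show False using E[OF that(1)] by simp
  qed
  obtain T' where T': "open T'" "t \<in> T'" "\<forall>x\<in>T'. x \<in> T \<and> \<sigma> x \<in> U"
  proof -
    have "openin (top_of_set T) (T \<inter> \<sigma> -` U)"
      using continuous_openin_preimage_gen[OF T(3) dphi(4)] by simp
    then have "open (T \<inter> \<sigma> -` U)" using T(1) openin_open_trans by blast
    then show ?thesis using that[of "T \<inter> \<sigma> -` U"] T(2) sig(2) dphi(5) by auto
  qed
  have d1: "((\<lambda>x. fst (\<phi> (\<sigma> x))) has_derivative (\<lambda>h. fst (D\<phi> p (h *\<^sub>R \<eta>)))) (at t)"
    using diff_chain_at[OF sig(1)[unfolded has_vector_derivative_def] hphi[of p, unfolded sig(2)[symmetric]]]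
    by (intro derivative_eq_intros; simp add: o_def sig(2))
  have d0: "((\<lambda>x. fst (\<phi> (\<sigma> x))) has_derivative (\<lambda>h. 0)) (at t)"
    by (rule has_derivative_transform_within_open[OF has_derivative_const T'(1,2)])
       (use T' T sing in auto)
  have f1: "fst (D\<phi> p \<eta>) = 0" using has_derivative_unique[OF d1 d0] by (metis scale_one)
  have "D\<Phi> (F p) (DF p \<eta>) = 0" using ker linear_0[OF linP] by simp
  then have "DfC (0,0) (D\<phi> p \<eta>) = 0" using fun_cong[OF E[OF dphi(5)], of \<eta>] dphi(3)
    by (simp add: zero_prod_def)
  then have "(DfC (0,0) (D\<phi> p \<eta>)) $ 3 = 0" by simp
  then have f2: "snd (D\<phi> p \<eta>) = 0" by (cases "D\<phi> p \<eta>") (simp add: DfC_def axis_def)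
  have "D\<phi> p \<eta> = 0" using f1 f2 by (simp add: prod_eq_iff)
  then have "\<eta> = 0" using injD[of p] linear_0[OF lin, of p] by (metis injD[of p, unfolded inj_def])
  then show False using eta by simp
qed



lemma smooth_Ck: "smooth f \<Longrightarrow> Ck k f" by (simp add: smooth_def)

lemma vd_eq:
  fixes f :: "real \<Rightarrow> 'b::real_normed_vector"
  assumes "f differentiable (at x)"
  shows "frechet_derivative f (at x) = (\<lambda>h. h *\<^sub>R vector_derivative f (at x))"
proof -
  have "(f has_vector_derivative vector_derivative f (at x)) (at x)"
    using assms vector_derivative_works by blast
  then show ?thesis unfolding has_vector_derivative_def
    by (rule frechet_derivative_at[symmetric])
qed

lemma Ck_Suc_real:
  fixes f :: "real \<Rightarrow> 'b::real_normed_vector"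
  assumes "Ck (Suc k) f" shows "Ck k (\<lambda>x. vector_derivative f (at x))"
proof -
  have "Ck k (\<lambda>x. frechet_derivative f (at x) 1)" using assms by simp
  moreover have "(\<lambda>x. frechet_derivative f (at x) 1) = (\<lambda>x. vector_derivative f (at x))"
    using assms by (simp add: vd_eq)
  ultimately show ?thesis by simp
qed

lemma smooth_C2:
  fixes f :: "real \<Rightarrow> 'b::real_normed_vector"
  assumes "smooth f"
  shows "(f has_vector_derivative vector_derivative f (at x)) (at x)"
    "(\<lambda>x. vector_derivative f (at x)) differentiable (at x)"
proof -
  have c: "Ck (Suc (Suc 0)) f" using assms smooth_Ck by blast
  then show "(f has_vector_derivative vector_derivative f (at x)) (at x)"
  proof -
    have "f differentiable (at x)" using c by simp
    then show ?thesis using vector_derivative_works by blast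
  qed
  have "Ck (Suc 0) (\<lambda>x. vector_derivative f (at x))" using Ck_Suc_real[OF c] .
  then show "(\<lambda>x. vector_derivative f (at x)) differentiable (at x)" by simp
qed

lemma vd_shift:
  fixes f :: "real \<Rightarrow> 'b::real_normed_vector"
  assumes "(f has_vector_derivative f') (at (x + c))"
  shows "((\<lambda>x. f (x + c)) has_vector_derivative f') (at x)"
proof -
  have "((\<lambda>x. x + c) has_vector_derivative 1) (at x)"
    by (auto intro!: derivative_eq_intros)
  from vector_diff_chain_at[OF this] assms show ?thesis by (simp add: o_def)
qed

lemma cramer2:
  fixes g x y :: "real^3"
  assumes ind: "\<And>a b. a *\<^sub>R g + b *\<^sub>R x = 0 \<Longrightarrow> a = 0 \<and> b = 0"
    and y: "y = \<alpha> *\<^sub>R g + \<beta> *\<^sub>R x"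
  defines "D \<equiv> (g \<bullet> g) * (x \<bullet> x) - (g \<bullet> x)^2"
  shows "D \<noteq> 0" "\<alpha> = ((y \<bullet> g) * (x \<bullet> x) - (y \<bullet> x) * (g \<bullet> x)) / D"
    "\<beta> = ((g \<bullet> g) * (y \<bullet> x) - (g \<bullet> x) * (y \<bullet> g)) / D"
proof -
  have x0: "x \<noteq> 0" using ind[of 0 1] by auto
  define v where "v = (x \<bullet> x) *\<^sub>R g - (g \<bullet> x) *\<^sub>R x"
  have "v \<noteq> 0" using ind[of "x \<bullet> x" "- (g \<bullet> x)"] x0 by (auto simp: v_def)
  then have "v \<bullet> v \<noteq> 0" by simp
  moreover have "v \<bullet> v = (x \<bullet> x) * D"
    by (simp add: v_def D_def inner_diff_left inner_diff_right inner_commute power2_eq_square algebra_simps)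
  ultimately show D: "D \<noteq> 0" by auto
  have e1: "y \<bullet> g = \<alpha> * (g \<bullet> g) + \<beta> * (g \<bullet> x)" and e2: "y \<bullet> x = \<alpha> * (g \<bullet> x) + \<beta> * (x \<bullet> x)"
    using y by (auto simp: inner_add_left inner_add_right inner_commute)
  show "\<alpha> = ((y \<bullet> g) * (x \<bullet> x) - (y \<bullet> x) * (g \<bullet> x)) / D"
    using D unfolding e1 e2 D_def by (simp add: field_simps power2_eq_square)
  show "\<beta> = ((g \<bullet> g) * (y \<bullet> x) - (g \<bullet> x) * (y \<bullet> g)) / D"
    using D unfolding e1 e2 D_def by (simp add: field_simps power2_eq_square)
qed

lemma det0_dep:
  fixes g x y :: "real^3"
  assumes ind: "\<And>a b. a *\<^sub>R g + b *\<^sub>R x = 0 \<Longrightarrow> a = 0 \<and> b = 0"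
    and d: "det (vector [g, x, y] :: real^3^3) = 0"
  shows "\<exists>\<alpha> \<beta>. y = \<alpha> *\<^sub>R g + \<beta> *\<^sub>R x"
proof -
  let ?A = "vector [g, x, y] :: real^3^3"
  have lin: "linear (\<lambda>c. transpose ?A *v c)" by (rule matrix_vector_mul_linear)
  have "det (matrix (\<lambda>c. transpose ?A *v c)) = 0" using d by (simp only: matrix_of_matrix_vector_mul det_transpose)
  then have "\<not> inj (\<lambda>c. transpose ?A *v c)" using det_nz_iff_inj[OF lin] by blast
  then obtain c where c: "c \<noteq> 0" "transpose ?A *v c = 0"
    using linear_injective_0[OF lin] by auto
  have e: "(c$1) *\<^sub>R g + (c$2) *\<^sub>R x + (c$3) *\<^sub>R y = 0"
  proof -
    have "(transpose ?A *v c)$j = c$1 * g$j + c$2 * x$j + c$3 * y$j" for j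
      unfolding matrix_vector_mult_def transpose_def
      by (simp only: vec_lambda_beta sum_3 vector_3) (simp add: mult.commute)
    then show ?thesis using c(2) by (simp add: vec_eq_iff)
  qed
  have "c$3 \<noteq> 0"
  proof
    assume "c$3 = 0"
    then have "c$1 = 0 \<and> c$2 = 0" using ind e by auto
    then show False using c(1) \<open>c$3 = 0\<close> by (simp add: vec_eq_iff forall_3)
  qed
  then have "y = (- c$1 / c$3) *\<^sub>R g + (- c$2 / c$3) *\<^sub>R x"
  proof -
    have "(c$3) *\<^sub>R y = - ((c$1) *\<^sub>R g + (c$2) *\<^sub>R x)" using e
      by (simp add: eq_neg_iff_add_eq_0 algebra_simps)
    moreover have "y = inverse (c$3) *\<^sub>R ((c$3) *\<^sub>R y)" using \<open>c$3 \<noteq> 0\<close> by simp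
    ultimately have "y = inverse (c$3) *\<^sub>R (- ((c$1) *\<^sub>R g + (c$2) *\<^sub>R x))" by simp
    then show ?thesis by (simp add: algebra_simps divide_inverse)
  qed
  then show ?thesis by blast
qed



locale dev =
  fixes \<gamma> \<xi> :: "real \<Rightarrow> real^3" and l :: real
  assumes l_pos: "l > 0"
    and \<gamma>_smooth: "smooth \<gamma>"
    and \<gamma>_periodic: "periodic l \<gamma>"
    and \<xi>_smooth: "smooth \<xi>"
    and \<xi>_odd: "odd_periodic l \<xi>"
    and indep: "\<forall>s a b. a *\<^sub>R vector_derivative \<gamma> (at s) + b *\<^sub>R \<xi> s = 0 \<longrightarrow> a = 0 \<and> b = 0"
    and det0: "\<forall>s. det (vector [vector_derivative \<gamma> (at s), \<xi> s,
                                 vector_derivative \<xi> (at s)] :: real^3^3) = 0"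
begin

definition "g s = vector_derivative \<gamma> (at s)"
definition "xd s = vector_derivative \<xi> (at s)"
definition "DD s = (g s \<bullet> g s) * (\<xi> s \<bullet> \<xi> s) - (g s \<bullet> \<xi> s)^2"
definition "a s = ((xd s \<bullet> g s) * (\<xi> s \<bullet> \<xi> s) - (xd s \<bullet> \<xi> s) * (g s \<bullet> \<xi> s)) / DD s"
definition "b s = ((g s \<bullet> g s) * (xd s \<bullet> \<xi> s) - (g s \<bullet> \<xi> s) * (xd s \<bullet> g s)) / DD s"

lemma ind: "c *\<^sub>R g s + d *\<^sub>R \<xi> s = 0 \<Longrightarrow> c = 0 \<and> d = 0"
  using indep by (simp add: g_def)

lemma \<gamma>_vd: "(\<gamma> has_vector_derivative g s) (at s)"
  and g_diff: "g differentiable (at s)"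
  using smooth_C2[OF \<gamma>_smooth] unfolding g_def by auto

lemma \<xi>_vd: "(\<xi> has_vector_derivative xd s) (at s)"
  and xd_diff: "xd differentiable (at s)"
  using smooth_C2[OF \<xi>_smooth] unfolding xd_def by auto

lemma isCont_g: "isCont g s" using g_diff differentiable_imp_continuous_within by blast
lemma isCont_xd: "isCont xd s" using xd_diff differentiable_imp_continuous_within by blast
lemma isCont_\<xi>: "isCont \<xi> s" using \<xi>_vd has_vector_derivative_continuous by blast
lemma \<xi>_diff: "\<xi> differentiable (at s)" using \<xi>_vd differentiable_def has_vector_derivative_def by blast

lemma decomp: "xd s = a s *\<^sub>R g s + b s *\<^sub>R \<xi> s" and DD_nz: "DD s \<noteq> 0"
proof -
  obtain \<alpha> \<beta> where y: "xd s = \<alpha> *\<^sub>R g s + \<beta> *\<^sub>R \<xi> s"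
    using det0_dep[of "g s" "\<xi> s" "xd s"] ind det0 unfolding g_def xd_def by blast
  note c = cramer2[of "g s" "\<xi> s", OF ind y]
  show "DD s \<noteq> 0" using c(1) by (simp add: DD_def)
  have "a s = \<alpha>" unfolding a_def DD_def using c(2) by simp
  moreover have "b s = \<beta>" unfolding b_def DD_def using c(3) by simp
  ultimately show "xd s = a s *\<^sub>R g s + b s *\<^sub>R \<xi> s" using y by simp
qed

lemma a_diff: "a differentiable (at s)"
  unfolding a_def[abs_def] DD_def
  using g_diff xd_diff \<xi>_diff DD_nz[of s] unfolding DD_def
  by (intro derivative_intros differentiable_inner) auto

lemma isCont_a: "isCont a s" using a_diff differentiable_imp_continuous_within by blast

lemma isCont_b: "isCont b s"
  unfolding b_def[abs_def]
  using isCont_g isCont_xd isCont_\<xi> DD_nz[of s] unfolding DD_def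
  by (intro continuous_intros) auto

lemma cont_a: "continuous_on S a" and cont_b: "continuous_on S b"
  using isCont_a isCont_b by (simp_all add: continuous_at_imp_continuous_on)

lemma a_deriv: "(a has_real_derivative deriv a s) (at s)"
  using a_diff DERIV_deriv_iff_real_differentiable by blast

lemma \<xi>_per: "\<xi> (s + l) = - \<xi> s" using \<xi>_odd odd_periodic_def by blast
lemma \<gamma>_per: "\<gamma> (s + l) = \<gamma> s" using \<gamma>_periodic periodic_def by blast

lemma g_per: "g (s + l) = g s"
proof -
  have "((\<lambda>x. \<gamma> (x + l)) has_vector_derivative g (s + l)) (at s)" by (rule vd_shift[OF \<gamma>_vd])
  then have "(\<gamma> has_vector_derivative g (s + l)) (at s)" by (simp add: \<gamma>_per)
  then show ?thesis using \<gamma>_vd vector_derivative_unique_at by blast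
qed

lemma xd_per: "xd (s + l) = - xd s"
proof -
  have "((\<lambda>x. \<xi> (x + l)) has_vector_derivative xd (s + l)) (at s)" by (rule vd_shift[OF \<xi>_vd])
  then have "((\<lambda>x. - \<xi> x) has_vector_derivative xd (s + l)) (at s)" by (simp add: \<xi>_per)
  moreover have "((\<lambda>x. - \<xi> x) has_vector_derivative - xd s) (at s)"
    using \<xi>_vd by (rule derivative_intros)
  ultimately show ?thesis using vector_derivative_unique_at by blast
qed

lemma ab_per: "a (s + l) = - a s" "b (s + l) = b s"
proof -
  have "a (s + l) *\<^sub>R g s + b (s + l) *\<^sub>R (- \<xi> s) = - (a s *\<^sub>R g s + b s *\<^sub>R \<xi> s)"
    using decomp[of "s + l"] decomp[of s] by (simp add: g_per \<xi>_per xd_per)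
  then have "(a (s + l) + a s) *\<^sub>R g s + (b s - b (s + l)) *\<^sub>R \<xi> s = 0"
    by (simp add: algebra_simps)
  from ind[OF this] show "a (s + l) = - a s" "b (s + l) = b s" by auto
qed

lemma ab_per': "a (s - l) = - a s" "b (s - l) = b s"
  using ab_per[of "s - l"] by auto

lemma da_per: "deriv a (s + l) = - deriv a s"
proof -
  have "((\<lambda>x. a (x + l)) has_real_derivative deriv a (s + l)) (at s)"
    using a_deriv DERIV_shift by blast
  moreover have "(\<lambda>x. a (x + l)) = (\<lambda>x. - a x)" by (simp add: ab_per)
  moreover have "((\<lambda>x. - a x) has_real_derivative - deriv a s) (at s)"
    using a_deriv by (rule derivative_intros)
  ultimately show ?thesis using DERIV_unique by fastforce
qed

lemma da_per': "deriv a (s - l) = - deriv a s" using da_per[of "s - l"] by auto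

end


lemma vd_fst:
  fixes f :: "real \<Rightarrow> 'b::real_normed_vector"
  assumes "(f has_vector_derivative f') (at (fst p))"
  shows "((\<lambda>z. f (fst z)) has_derivative (\<lambda>h. fst h *\<^sub>R f')) (at p)"
proof -
  have "(fst has_derivative fst) (at p)" by (rule has_derivative_fst[OF has_derivative_ident])
  from diff_chain_at[OF this assms[unfolded has_vector_derivative_def]] show ?thesis
    by (simp add: o_def)
qed

context dev begin

abbreviation "F \<equiv> asym_completion \<gamma> \<xi>"

definition "DF p = (\<lambda>h. fst h *\<^sub>R (g (fst p) + snd p *\<^sub>R xd (fst p)) + snd h *\<^sub>R \<xi> (fst p))"

lemma F_deriv: "(F has_derivative DF p) (at p)"
proof -
  have e: "F = (\<lambda>z. \<gamma> (fst z) + snd z *\<^sub>R \<xi> (fst z))"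
    by (auto simp: asym_completion_def)
  have 1: "((\<lambda>z. \<gamma> (fst z)) has_derivative (\<lambda>h. fst h *\<^sub>R g (fst p))) (at p)"
    by (rule vd_fst[OF \<gamma>_vd])
  have 2: "((\<lambda>z. \<xi> (fst z)) has_derivative (\<lambda>h. fst h *\<^sub>R xd (fst p))) (at p)"
    by (rule vd_fst[OF \<xi>_vd])
  have 3: "(snd has_derivative snd) (at p)" by (rule has_derivative_snd[OF has_derivative_ident])
  have "((\<lambda>z. \<gamma> (fst z) + snd z *\<^sub>R \<xi> (fst z)) has_derivative
     (\<lambda>h. fst h *\<^sub>R g (fst p) + (snd p *\<^sub>R (fst h *\<^sub>R xd (fst p)) + snd h *\<^sub>R \<xi> (fst p)))) (at p)"
  proof -
    have 4: "((\<lambda>z. snd z *\<^sub>R \<xi> (fst z)) has_derivative (\<lambda>h. snd p *\<^sub>R (fst h *\<^sub>R xd (fst p)) + snd h *\<^sub>R \<xi> (fst p))) (at p)"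
      using has_derivative_scaleR[OF 3 2] by simp
    show ?thesis using has_derivative_add[OF 1 4] by simp
  qed
  then show ?thesis unfolding e DF_def by (simp add: algebra_simps)
qed

lemma DF_alt: "DF (s,u) (h,k) = (h * (1 + u * a s)) *\<^sub>R g s + (h * u * b s + k) *\<^sub>R \<xi> s"
  unfolding DF_def using decomp[of s] by (simp add: algebra_simps)

lemma sing_iff: "singular_point F (s,u) \<longleftrightarrow> 1 + u * a s = 0"
proof -
  have fd: "frechet_derivative F (at (s,u)) = DF (s,u)" using F_deriv frechet_derivative_at by metis
  show ?thesis
  proof
    assume "singular_point F (s,u)"
    then have d: "dim (range (DF (s,u))) < 2" by (simp add: singular_point_def fd)
    show "1 + u * a s = 0"
    proof (rule ccontr)
      assume nz: "1 + u * a s \<noteq> 0"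
      have "2 \<le> dim (range (DF (s,u)))"
      proof (rule two_le_dim[of "DF (s,u) (1,0)" _ "DF (s,u) (0,1)"])
        fix c d assume "c *\<^sub>R DF (s, u) (1, 0) + d *\<^sub>R DF (s, u) (0, 1) = 0"
        then have "(c * (1 + u * a s)) *\<^sub>R g s + (c * u * b s + d) *\<^sub>R \<xi> s = 0"
          by (simp add: DF_alt algebra_simps)
        from ind[OF this] nz show "c = 0 \<and> d = 0" by auto
      qed auto
      with d show False by simp
    qed
  next
    assume z: "1 + u * a s = 0"
    have "range (DF (s,u)) \<subseteq> span {\<xi> s}"
    proof
      fix v assume "v \<in> range (DF (s,u))"
      then obtain h k where "v = DF (s,u) (h,k)" by auto
      then have "v = (h * u * b s + k) *\<^sub>R \<xi> s" using z by (simp add: DF_alt)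
      then show "v \<in> span {\<xi> s}" unfolding span_singleton by blast
    qed
    then show "singular_point F (s,u)" unfolding singular_point_def fd by (rule dim_le1)
  qed
qed

lemma noncusp:
  assumes "a s \<noteq> 0" "u * a s = -1" "deriv a s = a s * b s"
  shows "singular_point F (s,u) \<and> \<not> cuspidal_edge F (s,u)"
proof -
  have sp: "singular_point F (s,u)" using assms by (simp add: sing_iff algebra_simps)
  define \<sigma> where "\<sigma> t = (t, - 1 / a t)" for t
  define \<eta> where "\<eta> = (1::real, b s / a s)"
  let ?T = "{t. a t \<noteq> 0}"
  have oT: "open ?T" using cont_a by (intro open_Collect_neq continuous_on_const) auto
  have u: "u = - 1 / a s" using assms by (simp add: field_simps)
  have sd: "(\<sigma> has_vector_derivative \<eta>) (at s)"
  proof -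
    have "((\<lambda>t. - 1 / a t) has_real_derivative (deriv a s / (a s)^2)) (at s)"
      using a_deriv[of s] assms(1)
      by (auto intro!: derivative_eq_intros simp: power2_eq_square)
    then have "((\<lambda>t. - 1 / a t) has_vector_derivative (b s / a s)) (at s)"
      using assms by (simp add: has_real_derivative_iff_has_vector_derivative power2_eq_square)
    moreover have "((\<lambda>t. t) has_vector_derivative 1) (at s)" by (rule has_vector_derivative_id)
    ultimately have "((\<lambda>t. (t, - 1 / a t)) has_vector_derivative (1, b s / a s)) (at s)"
      by (rule has_vector_derivative_Pair[rotated])
    then show ?thesis unfolding \<sigma>_def \<eta>_def .
  qed
  have "\<not> rl_equivalent F (s,u) fC 0"
  proof (rule not_cusp[OF F_deriv _ _ _ _ oT])
    have "u * (a s * b s) = - b s" using assms(2) by (metis mult.assoc mult_minus_left mult_1)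
    then show "DF (s, u) \<eta> = 0" using assms u unfolding \<eta>_def by (simp add: DF_alt)
    show "\<eta> \<noteq> 0" by (simp add: \<eta>_def zero_prod_def)
    show "\<sigma> s = (s,u)" by (simp add: \<sigma>_def u)
    show "s \<in> ?T" using assms by simp
    show "continuous_on ?T \<sigma>" unfolding \<sigma>_def using cont_a
      by (intro continuous_intros) auto
    show "singular_point F (\<sigma> t')" if "t' \<in> ?T" for t'
      using that by (simp add: \<sigma>_def sing_iff)
    show "(\<sigma> has_vector_derivative \<eta>) (at s)" by (rule sd)
  qed
  then show ?thesis using sp cuspidal_edge_def by blast
qed

end


lemma class_prop:
  assumes st1: "\<And>s u. Pr (s,u) \<Longrightarrow> Pr (s + l, - u)"
    and st2: "\<And>s u. Pr (s,u) \<Longrightarrow> Pr (s - l, - u)"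
    and p: "Pr p" and pq: "(p, q) \<in> mob_rel l"
  shows "Pr q"
proof -
  obtain s u n where pq': "p = (s,u)" "q = (s + of_int n * l, if even n then u else - u)"
    using pq unfolding mob_rel_def by auto
  have "Pr (s + of_int n * l, if even n then u else - u)" for n :: int
  proof (induction n rule: int_induct[where k = 0])
    case base then show ?case using p pq' by simp
  next
    case (step1 i)
    have "Pr (s + of_int i * l + l, - (if even i then u else - u))" using st1[OF step1(2)] .
    then show ?case by (cases "even i") (simp_all add: algebra_simps)
  next
    case (step2 i)
    have "Pr (s + of_int i * l - l, - (if even i then u else - u))" using st2[OF step2(2)] .
    then show ?case by (cases "even i") (simp_all add: algebra_simps)
  qed
  then show ?thesis using pq' by simp
qed

lemma antideriv:
  fixes f :: "real \<Rightarrow> real"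
  assumes "continuous_on UNIV f"
  shows "\<exists>B. \<forall>x\<in>{c..d}. (B has_real_derivative f x) (at x)"
proof -
  have "((\<lambda>u. integral {c-1..u} f) has_real_derivative f x) (at x)" if "x \<in> {c..d}" for x
  proof -
    have "((\<lambda>u. integral {c-1..u} f) has_vector_derivative f x) (at x within {c-1..d+1})"
      using that by (intro integral_has_vector_derivative continuous_on_subset[OF assms]) auto
    moreover have "at x within {c-1..d+1} = at x" using that by (intro at_within_Icc_at) auto
    ultimately show ?thesis by (simp add: has_real_derivative_iff_has_vector_derivative)
  qed
  then show ?thesis by blast
qed

context dev begin

lemma a_nonzero: "\<exists>s. a s \<noteq> 0"
proof (rule ccontr)
  assume "\<not> (\<exists>s. a s \<noteq> 0)"
  then have a0: "a s = 0" for s by blast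
  have xdb: "xd s = b s *\<^sub>R \<xi> s" for s using decomp[of s] a0[of s] by simp
  obtain B where B: "\<And>x. x \<in> {0..l} \<Longrightarrow> (B has_real_derivative b x) (at x)"
    using antideriv[OF cont_b, of 0 l] by blast
  define h where "h x = exp (- B x) *\<^sub>R \<xi> x" for x
  have "(h has_derivative (\<lambda>h. 0)) (at x within {0..l})" if "x \<in> {0..l}" for x
  proof -
    have "((\<lambda>x. exp (- B x)) has_real_derivative exp (- B x) * (- b x)) (at x)"
      using B[OF that] by (auto intro!: derivative_eq_intros)
    from has_vector_derivative_scaleR[OF this \<xi>_vd[of x]]
    have "(h has_vector_derivative 0) (at x)" unfolding h_def by (simp add: xdb)
    then show ?thesis by (simp add: has_vector_derivative_def has_derivative_at_withinI)
  qed
  then obtain c where "\<forall>x\<in>{0..l}. h x = c" using has_derivative_zero_constant[of "{0..l}" h] by auto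
  then have "h l = h 0" using l_pos by auto
  moreover have "\<xi> l = - \<xi> 0" using \<xi>_per[of 0] by simp
  ultimately have "- (exp (- B l) *\<^sub>R \<xi> 0) = exp (- B 0) *\<^sub>R \<xi> 0" unfolding h_def
    by simp
  then have "exp (- B l) *\<^sub>R \<xi> 0 + exp (- B 0) *\<^sub>R \<xi> 0 = 0"
    by (metis neg_eq_iff_add_eq_0)
  then have "(exp (- B l) + exp (- B 0)) *\<^sub>R \<xi> 0 = 0" by (simp add: scaleR_left_distrib)
  moreover have "exp (- B l) + exp (- B 0) > 0" by (intro add_pos_pos) auto
  then have "exp (- B l) + exp (- B 0) \<noteq> 0" by linarith
  ultimately have "\<xi> 0 = 0" by simp
  then show False using ind[of 0 0 1] by simp
qed

lemma zero_in: "\<exists>z. s \<le> z \<and> z \<le> s + l \<and> a z = 0"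
proof (cases "a s \<le> 0")
  case True
  then show ?thesis using ab_per(1)[of s] l_pos
    by (intro IVT'[of a s 0 "s + l"] cont_a) auto
next
  case False
  then show ?thesis using ab_per(1)[of s] l_pos
    by (intro IVT2'[of a "s + l" 0 s] cont_a) auto
qed

lemma rolle_point:
  assumes "a s \<noteq> 0"
  shows "\<exists>s0 s1 t. s0 < s \<and> s < s1 \<and> (\<forall>x\<in>{s0<..<s1}. a x \<noteq> 0) \<and> s0 < t \<and> t < s1
             \<and> deriv a t = a t * b t"
proof -
  have cl: "closed {z. a z = 0}" using cont_a by (intro closed_Collect_eq continuous_on_const) auto
  let ?Z1 = "{s..s+l} \<inter> {z. a z = 0}" and ?Z0 = "{s-l..s} \<inter> {z. a z = 0}"
  have c1: "compact ?Z1" "compact ?Z0" using cl by auto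
  have n1: "?Z1 \<noteq> {}" using zero_in[of s] by auto
  have n0: "?Z0 \<noteq> {}" using zero_in[of "s - l"] by auto
  obtain s1 where s1: "s1 \<in> ?Z1" "\<forall>y\<in>?Z1. s1 \<le> y" using compact_attains_inf[OF c1(1) n1] by blast
  obtain s0 where s0: "s0 \<in> ?Z0" "\<forall>y\<in>?Z0. y \<le> s0" using compact_attains_sup[OF c1(2) n0] by blast
  have "s0 \<noteq> s" "s1 \<noteq> s" using s0 s1 assms by auto
  then have lt: "s0 < s" "s < s1" using s0 s1 by auto
  have nz: "\<forall>x\<in>{s0<..<s1}. a x \<noteq> 0"
  proof
    fix x assume x: "x \<in> {s0<..<s1}"
    show "a x \<noteq> 0"
    proof
      assume ax: "a x = 0"
      show False
      proof (cases "s \<le> x")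
        case True
        then have "x \<in> ?Z1" using x s1 ax by auto
        then show False using s1 x by force
      next
        case False
        then have "x \<in> ?Z0" using x s0 ax by auto
        then have "x \<le> s0" using s0(2) by blast
        then show False using x by simp
      qed
    qed
  qed
  obtain B where B: "\<And>x. x \<in> {s0..s1} \<Longrightarrow> (B has_real_derivative b x) (at x)"
    using antideriv[OF cont_b, of s0 s1] by blast
  define f where "f x = exp (- B x) * a x" for x
  have fd: "(f has_real_derivative exp (- B x) * (- b x) * a x + exp (- B x) * deriv a x) (at x)"
    if "x \<in> {s0..s1}" for x
    unfolding f_def using B[OF that] a_deriv[of x]
    by (auto intro!: derivative_eq_intros simp: algebra_simps)
  have "\<exists>z. s0 < z \<and> z < s1 \<and> DERIV f z :> 0"
  proof (rule Rolle)
    show "s0 < s1" using lt by simp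
    show "f s0 = f s1" using s0 s1 by (simp add: f_def)
    show "continuous_on {s0..s1} f"
      using fd by (intro continuous_at_imp_continuous_on) (blast intro: DERIV_isCont)
    show "f differentiable (at x)" if "s0 < x" "x < s1" for x
      using fd[of x] that real_differentiable_def by fastforce
  qed
  then obtain t where t: "s0 < t" "t < s1" "DERIV f t :> 0" by blast
  then have "exp (- B t) * (- b t) * a t + exp (- B t) * deriv a t = 0"
    using fd[of t] DERIV_unique by force
  then have "exp (- B t) * (deriv a t - a t * b t) = 0" by (simp add: algebra_simps)
  then have "deriv a t = a t * b t" by simp
  then show ?thesis using lt nz t by blast
qed

end


lemma mob_open: "openin (mob_top l) U \<longleftrightarrow> U \<subseteq> UNIV // mob_rel l \<and> open (\<Union>U)"
  by (simp add: mob_top_def quot_top_def istopology_quot[OF equiv_mob_rel])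

lemma mob_topspace: "topspace (mob_top l) = UNIV // mob_rel l"
proof
  show "topspace (mob_top l) \<subseteq> UNIV // mob_rel l" unfolding topspace_def mob_open by blast
  have "openin (mob_top l) (UNIV // mob_rel l)"
    unfolding mob_open Union_quotient[OF equiv_mob_rel] by simp
  then show "UNIV // mob_rel l \<subseteq> topspace (mob_top l)" by (rule openin_subset)
qed

lemma class_mem: "p \<in> mob_rel l `` {p}"
  using equiv_class_self[OF equiv_mob_rel] by blast

lemma mob_cont:
  assumes "continuous_on T \<sigma>"
  shows "continuous_map (top_of_set T) (mob_top l) (\<lambda>t. mob_rel l `` {\<sigma> t})"
  unfolding continuous_map_def
proof (intro conjI allI impI)
  show "(\<lambda>t. mob_rel l `` {\<sigma> t}) \<in> topspace (top_of_set T) \<rightarrow> topspace (mob_top l)"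
    by (auto simp: mob_topspace quotientI)
  fix U assume U: "openin (mob_top l) U"
  have eq: "{x \<in> topspace (top_of_set T). mob_rel l `` {\<sigma> x} \<in> U} = T \<inter> \<sigma> -` (\<Union>U)"
  proof (rule set_eqI, rule iffI)
    fix x assume "x \<in> {x \<in> topspace (top_of_set T). mob_rel l `` {\<sigma> x} \<in> U}"
    then show "x \<in> T \<inter> \<sigma> -` (\<Union>U)" using class_mem[of "\<sigma> x" l] by auto
  next
    fix x assume x: "x \<in> T \<inter> \<sigma> -` (\<Union>U)"
    then obtain c where c: "c \<in> U" "\<sigma> x \<in> c" by auto
    then have "c \<in> UNIV // mob_rel l" using U mob_open by blast
    then obtain y where y: "c = mob_rel l `` {y}" by (auto elim: quotientE)
    then have "(y, \<sigma> x) \<in> mob_rel l" using c by auto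
    then have "mob_rel l `` {\<sigma> x} = c" using y equiv_class_eq[OF equiv_mob_rel] by metis
    then show "x \<in> {x \<in> topspace (top_of_set T). mob_rel l `` {\<sigma> x} \<in> U}" using x c by auto
  qed
  show "openin (top_of_set T) {x \<in> topspace (top_of_set T). mob_rel l `` {\<sigma> x} \<in> U}"
    unfolding eq using U mob_open continuous_openin_preimage_gen[OF assms] by blast
qed

context dev begin

definition "Pr1 p \<longleftrightarrow> snd p * a (fst p) = -1"
definition "Pr2 p \<longleftrightarrow> snd p * a (fst p) = -1 \<and> deriv a (fst p) = a (fst p) * b (fst p)"

lemma Pr1_class: "Pr1 p \<Longrightarrow> (p, q) \<in> mob_rel l \<Longrightarrow> Pr1 q"
  by (rule class_prop[of Pr1]) (auto simp: Pr1_def ab_per ab_per')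

lemma Pr2_class: "Pr2 p \<Longrightarrow> (p, q) \<in> mob_rel l \<Longrightarrow> Pr2 q"
  by (rule class_prop[of Pr2]) (auto simp: Pr2_def ab_per ab_per' da_per da_per')

lemma Pr1_sing: "Pr1 p \<Longrightarrow> singular_point F p"
  by (cases p) (simp add: Pr1_def sing_iff algebra_simps)

lemma Pr2_good: "Pr2 p \<Longrightarrow> singular_point F p \<and> \<not> cuspidal_edge F p"
proof (cases p)
  case (Pair s u)
  assume "Pr2 p"
  then have h: "u * a s = -1" "deriv a s = a s * b s" using Pair by (auto simp: Pr2_def)
  then have "a s \<noteq> 0" by auto
  then show ?thesis using noncusp h Pair by blast
qed

lemma class_sing: "Pr1 p \<Longrightarrow> mob_rel l `` {p} \<in> singular_set l F"
  unfolding singular_set_def using Pr1_class Pr1_sing by (auto intro: quotientI)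

lemma main:
  "(\<forall>C \<in> connected_components_of (subtopology (mob_top l) (singular_set l F)).
            \<exists>c\<in>C. \<forall>p\<in>c. singular_point F p \<and> \<not> cuspidal_edge F p)
         \<and> (\<exists>p. singular_point F p \<and> \<not> cuspidal_edge F p)"
proof
  let ?X = "subtopology (mob_top l) (singular_set l F)"
  have tX: "topspace ?X = singular_set l F"
    by (auto simp: mob_topspace singular_set_def)
  show "\<forall>C \<in> connected_components_of ?X. \<exists>c\<in>C. \<forall>p\<in>c. singular_point F p \<and> \<not> cuspidal_edge F p"
  proof
    fix C assume "C \<in> connected_components_of ?X"
    then obtain x0 where x0: "x0 \<in> singular_set l F" "C = connected_component_of_set ?X x0"
      unfolding connected_components_of_def tX by blast
    then obtain s u where su: "x0 = mob_rel l `` {(s,u)}" "\<forall>p\<in>x0. singular_point F p"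
      unfolding singular_set_def by (auto elim!: quotientE)
    then have "singular_point F (s,u)" using class_mem by blast
    then have "1 + u * a s = 0" by (simp add: sing_iff)
    then have as1: "a s \<noteq> 0" by auto
    then have as: "a s \<noteq> 0" "u = - 1 / a s" using \<open>1 + u * a s = 0\<close> by (auto simp: field_simps)
    obtain s0 s1 t where st: "s0 < s" "s < s1" "\<forall>x\<in>{s0<..<s1}. a x \<noteq> 0" "s0 < t" "t < s1"
      "deriv a t = a t * b t" using rolle_point[OF as(1)] by blast
    define \<sigma> where "\<sigma> x = (x, - 1 / a x)" for x
    let ?I = "{s0<..<s1}"
    have P1: "Pr1 (\<sigma> x)" if "x \<in> ?I" for x using st(3) that by (simp add: Pr1_def \<sigma>_def)
    have "continuous_on ?I \<sigma>" unfolding \<sigma>_def using st(3) cont_a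
      by (intro continuous_intros) auto
    then have "continuous_map (top_of_set ?I) (mob_top l) (\<lambda>x. mob_rel l `` {\<sigma> x})"
      by (rule mob_cont)
    then have cm: "continuous_map (top_of_set ?I) ?X (\<lambda>x. mob_rel l `` {\<sigma> x})"
      by (rule continuous_map_into_subtopology) (use P1 class_sing in auto)
    have "connectedin (top_of_set ?I) ?I" by (simp add: connectedin_subtopology)
    from connectedin_continuous_map_image[OF cm this]
    have conn: "connectedin ?X ((\<lambda>x. mob_rel l `` {\<sigma> x}) ` ?I)" .
    have "x0 = mob_rel l `` {\<sigma> s}" using su as by (simp add: \<sigma>_def)
    then have "x0 \<in> (\<lambda>x. mob_rel l `` {\<sigma> x}) ` ?I" using st by auto
    from connected_component_of_maximal[OF conn this]
    have sub: "(\<lambda>x. mob_rel l `` {\<sigma> x}) ` ?I \<subseteq> C" using x0(2) by simp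
    have "t \<in> ?I" using st by simp
    then have "mob_rel l `` {\<sigma> t} \<in> (\<lambda>x. mob_rel l `` {\<sigma> x}) ` ?I" by (rule imageI)
    then have "mob_rel l `` {\<sigma> t} \<in> C" by (rule subsetD[OF sub])
    moreover have P2: "Pr2 (\<sigma> t)" using st by (simp add: Pr2_def \<sigma>_def)
    have "\<forall>q\<in>mob_rel l `` {\<sigma> t}. singular_point F q \<and> \<not> cuspidal_edge F q"
    proof
      fix q assume "q \<in> mob_rel l `` {\<sigma> t}"
      then have "(\<sigma> t, q) \<in> mob_rel l" by simp
      from Pr2_class[OF P2 this] show "singular_point F q \<and> \<not> cuspidal_edge F q" by (rule Pr2_good)
    qed
    ultimately show "\<exists>c\<in>C. \<forall>p\<in>c. singular_point F p \<and> \<not> cuspidal_edge F p"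
      by blast
  qed
  show "\<exists>p. singular_point F p \<and> \<not> cuspidal_edge F p"
  proof -
    obtain s where "a s \<noteq> 0" using a_nonzero by blast
    from rolle_point[OF this] obtain s0 s1 t where
      h: "\<forall>x\<in>{s0<..<s1}. a x \<noteq> 0" "s0 < t" "t < s1" "deriv a t = a t * b t" by blast
    then have "a t \<noteq> 0" "deriv a t = a t * b t" by auto
    then have "Pr2 (t, - 1 / a t)" by (simp add: Pr2_def)
    then show ?thesis using Pr2_good by blast
  qed
qed

end

theorem lemma2p7:
  fixes \<gamma> \<xi> :: "real \<Rightarrow> real^3" and l :: real
  assumes l_pos: "l > 0"
    and \<gamma>_smooth: "smooth \<gamma>"
    and \<gamma>_regular: "\<forall>s. vector_derivative \<gamma> (at s) \<noteq> 0"
    and \<gamma>_periodic: "periodic l \<gamma>"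
    and \<xi>_smooth: "smooth \<xi>"
    and \<xi>_odd: "odd_periodic l \<xi>"
    and indep: "\<forall>s a b. a *\<^sub>R vector_derivative \<gamma> (at s) + b *\<^sub>R \<xi> s = 0 \<longrightarrow> a = 0 \<and> b = 0"
    and det0: "\<forall>s. det (vector [vector_derivative \<gamma> (at s), \<xi> s,
                                 vector_derivative \<xi> (at s)] :: real^3^3) = 0"
  defines "F \<equiv> asym_completion \<gamma> \<xi>"
  shows "(\<forall>C \<in> connected_components_of (subtopology (mob_top l) (singular_set l F)).
            \<exists>c\<in>C. \<forall>p\<in>c. singular_point F p \<and> \<not> cuspidal_edge F p)
         \<and> (\<exists>p. singular_point F p \<and> \<not> cuspidal_edge F p)"
proof -
  have "dev \<gamma> \<xi> l"
    using l_pos \<gamma>_smooth \<gamma>_periodic \<xi>_smooth \<xi>_odd indep det0 by (unfold_locales; blast)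
  from dev.main[OF this] show ?thesis unfolding F_def .
qed

end
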